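(* Let $\vec H$ be a fixed oriented graph whose underlying graph $H$ is bipartite, and suppose $\vec H$ is well-oriented with respect to the bipartition $V(H)=A(H)\sqcup B(H)$, i.e. every arc of $\vec H$ goes from $A(H)$ to $B(H)$. Let \[\Delta'(H)=\min\Big\{\max_{v\in A(H)}\deg_H(v),\ \max_{v\in B(H)}\deg_H(v)\Big\}.\] Then $\mathrm{ex}(n,\vec H)=O(n^{2-1/\Delta'(H)})$.
   Context: An oriented graph is a digraph in which each pair of vertices is joined by at most one arc. $\mathrm{ex}(n,\vec H)$ is the maximum number of arcs in an $n$-vertex oriented graph that does not contain $\vec H$ as a subgraph (respecting orientations). *)

theory Defs
  imports Complex_Main "HOL-Library.Landau_Symbols"
begin

definition oriented_graph :: "'a set \<Rightarrow> ('a \<times> 'a) set \<Rightarrow> bool" where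
  "oriented_graph V E \<longleftrightarrow> finite V \<and> E \<subseteq> V \<times> V \<and>
     (\<forall>v. (v, v) \<notin> E) \<and> (\<forall>u v. (u, v) \<in> E \<longrightarrow> (v, u) \<notin> E)"

definition contains_oriented ::
  "'a set \<Rightarrow> ('a \<times> 'a) set \<Rightarrow> 'b set \<Rightarrow> ('b \<times> 'b) set \<Rightarrow> bool" where
  "contains_oriented V E VH EH \<longleftrightarrow>
     (\<exists>f. inj_on f VH \<and> f ` VH \<subseteq> V \<and> (\<forall>(u, v) \<in> EH. (f u, f v) \<in> E))"

definition ex_oriented :: "nat \<Rightarrow> 'b set \<Rightarrow> ('b \<times> 'b) set \<Rightarrow> nat" where
  "ex_oriented n VH EH = Sup {card E | E. oriented_graph {0..<n} E \<and>
                                 \<not> contains_oriented {0..<n} E VH EH}"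

definition udeg :: "('b \<times> 'b) set \<Rightarrow> 'b \<Rightarrow> nat" where
  "udeg EH v = card {u. (v, u) \<in> EH \<or> (u, v) \<in> EH}"

definition Delta' :: "('b \<times> 'b) set \<Rightarrow> 'b set \<Rightarrow> 'b set \<Rightarrow> nat" where
  "Delta' EH A B = min (Sup (udeg EH ` A)) (Sup (udeg EH ` B))"

end

theory Submission
  imports Defs
begin


lemma cheb_ident:
  fixes a b :: "'a \<Rightarrow> real"
  shows "2 * (real (card S) * (\<Sum>j\<in>S. a j * b j) - (\<Sum>j\<in>S. b j) * (\<Sum>i\<in>S. a i))
     = (\<Sum>j\<in>S. (\<Sum>i\<in>S. (a j - a i) * (b j - b i)))"
    by (simp only: one_add_one[symmetric] algebra_simps)
      (simp add: algebra_simps sum_subtractf sum.distrib sum.swap[of "\<lambda>i j. a i * b j"] sum_distrib_left)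

lemma cheb_set:
  fixes f :: "'a \<Rightarrow> real"
  assumes "finite S" "\<And>i. i \<in> S \<Longrightarrow> f i \<ge> 0"
  shows "(\<Sum>i\<in>S. f i ^ Suc k) * (\<Sum>i\<in>S. f i) \<le> real (card S) * (\<Sum>i\<in>S. f i ^ Suc (Suc k))"
proof -
  let ?a = "\<lambda>i. f i ^ Suc k"
  let ?S = "(\<Sum>j\<in>S. (\<Sum>i\<in>S. (?a j - ?a i) * (f j - f i)))"
  have "2 * (real (card S) * (\<Sum>j\<in>S. ?a j * f j) - (\<Sum>j\<in>S. f j) * (\<Sum>i\<in>S. ?a i)) = ?S"
    using cheb_ident[of S ?a f] by simp
  also have "?S \<ge> 0"
  proof (intro sum_nonneg)
    fix i j assume "i \<in> S" "j \<in> S"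
    then have "f i \<ge> 0" "f j \<ge> 0" using assms by auto
    then show "0 \<le> (?a i - ?a j) * (f i - f j)"
    proof (cases "f i \<le> f j")
      case True
      then have "?a i \<le> ?a j" using \<open>f i \<ge> 0\<close> by (intro power_mono) auto
      then show ?thesis using True by (intro mult_nonpos_nonpos) auto
    next
      case False
      then have "?a j \<le> ?a i" using \<open>f j \<ge> 0\<close> by (intro power_mono) auto
      then show ?thesis using False by (intro mult_nonneg_nonneg) auto
    qed
  qed
  finally show ?thesis by (simp add: algebra_simps)
qed

lemma power_mean_nat:
  fixes f :: "'a \<Rightarrow> nat"
  assumes "finite S"
  shows "(\<Sum>i\<in>S. f i) ^ Suc k \<le> card S ^ k * (\<Sum>i\<in>S. f i ^ Suc k)"
proof -
  have "(\<Sum>i\<in>S. real (f i)) ^ Suc k \<le> real (card S) ^ k * (\<Sum>i\<in>S. real (f i) ^ Suc k)"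
  proof (induction k)
    case 0 then show ?case by simp
  next
    case (Suc k)
    have "(\<Sum>i\<in>S. real (f i)) ^ Suc (Suc k) = (\<Sum>i\<in>S. real (f i)) ^ Suc k * (\<Sum>i\<in>S. real (f i))"
      by simp
    also have "\<dots> \<le> (real (card S) ^ k * (\<Sum>i\<in>S. real (f i) ^ Suc k)) * (\<Sum>i\<in>S. real (f i))"
      by (rule mult_right_mono[OF Suc]) (simp add: sum_nonneg)
    also have "\<dots> = real (card S) ^ k * ((\<Sum>i\<in>S. real (f i) ^ Suc k) * (\<Sum>i\<in>S. real (f i)))"
      by simp
    also have "\<dots> \<le> real (card S) ^ k * (real (card S) * (\<Sum>i\<in>S. real (f i) ^ Suc (Suc k)))"
      by (rule mult_left_mono[OF cheb_set[OF assms]]) auto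
    also have "\<dots> = real (card S) ^ Suc k * (\<Sum>i\<in>S. real (f i) ^ Suc (Suc k))"
      by (simp only: power_Suc mult.assoc mult.commute mult.left_commute)
    finally show ?case .
  qed
  then have "real ((\<Sum>i\<in>S. f i) ^ Suc k) \<le> real (card S ^ k * (\<Sum>i\<in>S. f i ^ Suc k))"
    by simp
  then show ?thesis by linarith
qed



definition CN :: "'a set \<Rightarrow> ('a \<times> 'a) set \<Rightarrow> 'a set \<Rightarrow> 'a set" where
  "CN V E T = {w \<in> V. \<forall>t\<in>T. (w, t) \<in> E}"

lemma pad_list:
  assumes "finite T" "T \<subseteq> U" "card T \<le> r" "u0 \<in> U"
  shows "\<exists>y. length y = r \<and> T \<subseteq> set y \<and> set y \<subseteq> U"
proof -
  obtain l where l: "set l = T" "distinct l" using finite_distinct_list[OF assms(1)] by blast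
  then have "length l = card T" using distinct_card by metis
  then show ?thesis using l assms
    by (intro exI[of _ "l @ replicate (r - length l) u0"]) auto
qed

lemma embed:
  fixes VH :: "'b set" and EH :: "('b \<times> 'b) set" and V :: "'a set"
  assumes fin: "finite VH" and AB: "A \<union> B = VH" "A \<inter> B = {}" and EAB: "EH \<subseteq> A \<times> B"
    and deg: "\<And>v. v \<in> A \<Longrightarrow> card {u. (v, u) \<in> EH} \<le> r"
    and finV: "finite V" and UV: "U \<subseteq> V" and cardU: "card U > card VH"
    and good: "\<And>y. set y \<subseteq> U \<Longrightarrow> length y = r \<Longrightarrow> card (CN V E (set y)) \<ge> card VH"
  shows "contains_oriented V E VH EH"
proof -
  have finA: "finite A" and finB: "finite B" using fin AB by auto
  have finU: "finite U" using finV UV finite_subset by blast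
  obtain u0 where u0: "u0 \<in> U" using cardU by fastforce
  have "card B \<le> card U" using card_mono[OF fin] AB cardU by fastforce
  then obtain g where g: "g ` B \<subseteq> U" "inj_on g B" using card_le_inj[OF finB finU] by blast
  have step: "\<exists>f. inj_on f (B \<union> A0) \<and> f ` (B \<union> A0) \<subseteq> V \<and> f ` B \<subseteq> U \<and>
      (\<forall>(u, z) \<in> EH. u \<in> A0 \<longrightarrow> (f u, f z) \<in> E)" if "A0 \<subseteq> A" for A0
  proof -
    have "finite A0" using that finA finite_subset by blast
    then show ?thesis using that
    proof (induction A0 rule: finite_induct)
      case empty
      then show ?case using g UV by (intro exI[of _ g]) auto
    next
      case (insert v A0)
      then obtain f where f: "inj_on f (B \<union> A0)" "f ` (B \<union> A0) \<subseteq> V" "f ` B \<subseteq> U"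
        "\<forall>(u, z) \<in> EH. u \<in> A0 \<longrightarrow> (f u, f z) \<in> E" by auto
      have vA: "v \<in> A" using insert by auto
      have vB: "v \<notin> B" using vA AB by auto
      define N where "N = {u. (v, u) \<in> EH}"
      have NB: "N \<subseteq> B" using EAB N_def by auto
      have finN: "finite N" using NB finB finite_subset by blast
      have c0: "card (f ` N) \<le> r" using card_image_le[OF finN, of f] deg[OF vA] unfolding N_def by linarith
      have fNU: "f ` N \<subseteq> U" using NB f(3) by auto
      obtain y where y: "length y = r" "f ` N \<subseteq> set y" "set y \<subseteq> U"
        using pad_list[OF finite_imageI[OF finN] fNU c0 u0] by blast
      have "CN V E (set y) \<subseteq> CN V E (f ` N)" using y(2) unfolding CN_def by auto
      moreover have "finite (CN V E (f ` N))" using finV unfolding CN_def by auto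
      ultimately have c1: "card (CN V E (f ` N)) \<ge> card VH"
        using good[OF y(3) y(1)] card_mono by (meson le_trans)
      have "B \<union> A0 \<subset> VH" using insert AB vB by auto
      then have "card (B \<union> A0) < card VH" using fin psubset_card_mono by blast
      then have "card (f ` (B \<union> A0)) < card VH" using card_image_le[of "B \<union> A0" f] finB insert(1)
        by fastforce
      then have lt: "card (f ` (B \<union> A0)) < card (CN V E (f ` N))" using c1 by linarith
      have "\<not> CN V E (f ` N) \<subseteq> f ` (B \<union> A0)"
      proof
        assume "CN V E (f ` N) \<subseteq> f ` (B \<union> A0)"
        moreover have "finite (f ` (B \<union> A0))" using finB insert(1) by blast
        ultimately have "card (CN V E (f ` N)) \<le> card (f ` (B \<union> A0))" by (rule card_mono[rotated])
        then show False using lt by linarith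
      qed
      then obtain w where w: "w \<in> CN V E (f ` N)" "w \<notin> f ` (B \<union> A0)" by blast
      define f' where "f' = f(v := w)"
      have vn: "v \<notin> B \<union> A0" using vB insert by auto
      have eq: "\<And>x. x \<in> B \<union> A0 \<Longrightarrow> f' x = f x" using vn f'_def by auto
      have "inj_on f' (B \<union> insert v A0)"
      proof -
        have "inj_on f' (B \<union> A0)" using f(1) eq inj_on_cong by blast
        moreover have "f' v \<notin> f' ` (B \<union> A0)" using w eq f'_def by (auto simp: image_iff)
        ultimately show ?thesis using vn by (simp add: Un_insert_right)
      qed
      moreover have "f' ` (B \<union> insert v A0) \<subseteq> V"
        using f(2) eq w(1) f'_def unfolding CN_def by auto
      moreover have "f' ` B \<subseteq> U" using f(3) eq by auto
      moreover have "\<forall>(u, z) \<in> EH. u \<in> insert v A0 \<longrightarrow> (f' u, f' z) \<in> E"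
      proof (intro ballI impI, clarify)
        fix u z assume uz: "(u, z) \<in> EH" "u \<in> insert v A0"
        have zB: "z \<in> B" using uz EAB by auto
        then have fz: "f' z = f z" using eq by auto
        show "(f' u, f' z) \<in> E"
        proof (cases "u = v")
          case True
          then have "z \<in> N" using uz N_def by auto
          then show ?thesis using w(1) True fz f'_def unfolding CN_def by auto
        next
          case False
          then have "u \<in> A0" using uz by auto
          then show ?thesis using f(4) uz fz eq by auto
        qed
      qed
      ultimately show ?case by blast
    qed
  qed
  obtain f where f: "inj_on f (B \<union> A)" "f ` (B \<union> A) \<subseteq> V"
      "\<forall>(u, z) \<in> EH. u \<in> A \<longrightarrow> (f u, f z) \<in> E" using step[of A] by auto
  have "\<forall>(u, z) \<in> EH. (f u, f z) \<in> E" using f(3) EAB by auto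
  then show ?thesis unfolding contains_oriented_def using f AB
    by (intro exI[of _ f]) (auto simp: Un_commute)
qed



lemma double_count:
  assumes "finite X" "finite Y"
  shows "(\<Sum>x\<in>X. card {y\<in>Y. R x y}) = (\<Sum>y\<in>Y. card {x\<in>X. R x y})"
proof -
  have "(\<Sum>x\<in>X. card {y\<in>Y. R x y}) = (\<Sum>x\<in>X. \<Sum>y\<in>Y. if R x y then 1 else 0)"
    using assms by (simp add: sum.inter_filter[symmetric])
  also have "\<dots> = (\<Sum>y\<in>Y. \<Sum>x\<in>X. if R x y then 1 else 0)" by (rule sum.swap)
  also have "\<dots> = (\<Sum>y\<in>Y. card {x\<in>X. R x y})"
    using assms by (simp add: sum.inter_filter[symmetric])
  finally show ?thesis .
qed

lemma card_E_indeg: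
  assumes "finite V" "E \<subseteq> V \<times> V"
  shows "card E = (\<Sum>u\<in>V. card {w\<in>V. (w, u) \<in> E})"
proof -
  have "E = prod.swap ` (SIGMA u:V. {w\<in>V. (w, u) \<in> E})"
  proof
    show "E \<subseteq> prod.swap ` (SIGMA u:V. {w\<in>V. (w, u) \<in> E})"
    proof clarify
      fix w u assume "(w, u) \<in> E"
      then show "(w, u) \<in> prod.swap ` (SIGMA u:V. {w\<in>V. (w, u) \<in> E})"
        using assms(2) by (intro image_eqI[of _ _ "(u, w)"]) auto
    qed
    show "prod.swap ` (SIGMA u:V. {w\<in>V. (w, u) \<in> E}) \<subseteq> E"
    proof (rule subsetI)
      fix p assume "p \<in> prod.swap ` (SIGMA u:V. {w\<in>V. (w, u) \<in> E})"
      then obtain q where q: "q \<in> (SIGMA u:V. {w\<in>V. (w, u) \<in> E})" "p = prod.swap q" by blast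
      obtain u w where "q = (u, w)" by (cases q)
      then show "p \<in> E" using q by simp
    qed
  qed
  moreover have "inj_on prod.swap (SIGMA u:V. {w\<in>V. (w, u) \<in> E})" by (simp add: inj_on_def)
  ultimately have "card E = card (SIGMA u:V. {w\<in>V. (w, u) \<in> E})"
  proof -
    define S where "S = (SIGMA u:V. {w\<in>V. (w, u) \<in> E})"
    assume "E = prod.swap ` (SIGMA u:V. {w\<in>V. (w, u) \<in> E})" "inj_on prod.swap (SIGMA u:V. {w\<in>V. (w, u) \<in> E})"
    then have e: "E = prod.swap ` S" and i: "inj_on prod.swap S" unfolding S_def by simp_all
    have "card (prod.swap ` S) = card S" by (rule card_image[OF i])
    then have "card E = card S" using e by (simp only:)
    then show ?thesis unfolding S_def .
  qed
  also have "\<dots> = (\<Sum>u\<in>V. card {w\<in>V. (w, u) \<in> E})" using assms(1) by (simp add: card_SigmaI)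
  finally show ?thesis .
qed

lemma core:
  fixes VH :: "'b set" and EH :: "('b \<times> 'b) set" and V :: "'a set"
  assumes fin: "finite VH" and AB: "A \<union> B = VH" "A \<inter> B = {}" and EAB: "EH \<subseteq> A \<times> B"
    and deg: "\<And>v. v \<in> A \<Longrightarrow> card {u. (v, u) \<in> EH} \<le> r" and r1: "r \<ge> 1"
    and finV: "finite V" and EV: "E \<subseteq> V \<times> V"
    and nc: "\<not> contains_oriented V E VH EH"
  shows "card E ^ r \<le> (card VH ^ r + card VH) * card V ^ (2 * r - 1)"
proof (rule ccontr)
  assume big: "\<not> ?thesis"
  define a where "a = card VH"
  define n where "n = card V"
  define X where "X = {x. set x \<subseteq> V \<and> length x = r}"
  define U where "U x = {u\<in>V. \<forall>i\<in>set x. (i, u) \<in> E}" for x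
  define ind where "ind u = card {w\<in>V. (w, u) \<in> E}" for u
  define Bad where "Bad = {y\<in>X. card (CN V E (set y)) < a}"
  define badin where "badin x = {y\<in>Bad. set y \<subseteq> U x}" for x
  have finX: "finite X" unfolding X_def using finV by (rule finite_lists_length_eq)
  have cardX: "card X = n ^ r" unfolding X_def n_def by (rule card_lists_length_eq[OF finV])
  have finBad: "finite Bad" using finX Bad_def by auto
  have cardBad: "card Bad \<le> n ^ r" using card_mono[OF finX] Bad_def cardX by fastforce
  obtain k where k: "r = Suc k" using r1 by (cases r) auto
  have sumU: "(\<Sum>x\<in>X. card (U x)) = (\<Sum>u\<in>V. ind u ^ r)"
  proof -
    have "(\<Sum>x\<in>X. card (U x)) = (\<Sum>x\<in>X. card {u\<in>V. \<forall>i\<in>set x. (i, u) \<in> E})"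
      unfolding U_def ..
    also have "\<dots> = (\<Sum>u\<in>V. card {x\<in>X. \<forall>i\<in>set x. (i, u) \<in> E})"
      by (rule double_count[OF finX finV])
    also have "\<dots> = (\<Sum>u\<in>V. ind u ^ r)"
    proof (rule sum.cong[OF refl])
      fix u assume "u \<in> V"
      have "{x\<in>X. \<forall>i\<in>set x. (i, u) \<in> E} = {x. set x \<subseteq> {w\<in>V. (w, u) \<in> E} \<and> length x = r}"
        unfolding X_def by auto
      then show "card {x\<in>X. \<forall>i\<in>set x. (i, u) \<in> E} = ind u ^ r"
        unfolding ind_def using finV by (simp add: card_lists_length_eq)
    qed
    finally show ?thesis .
  qed
  have sumBad: "(\<Sum>x\<in>X. card (badin x)) \<le> n ^ r * a ^ r"
  proof -
    have "(\<Sum>x\<in>X. card (badin x)) = (\<Sum>x\<in>X. card {y\<in>Bad. set y \<subseteq> U x})"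
      unfolding badin_def ..
    also have "\<dots> = (\<Sum>y\<in>Bad. card {x\<in>X. set y \<subseteq> U x})"
      by (rule double_count[OF finX finBad])
    also have "\<dots> \<le> (\<Sum>y\<in>Bad. a ^ r)"
    proof (rule sum_mono)
      fix y assume y: "y \<in> Bad"
      then have yV: "set y \<subseteq> V" unfolding Bad_def X_def by auto
      have "{x\<in>X. set y \<subseteq> U x} = {x. set x \<subseteq> CN V E (set y) \<and> length x = r}"
        using yV unfolding X_def U_def CN_def by auto
      moreover have "finite (CN V E (set y))" using finV unfolding CN_def by auto
      ultimately have "card {x\<in>X. set y \<subseteq> U x} = card (CN V E (set y)) ^ r"
        by (simp add: card_lists_length_eq)
      also have "\<dots> \<le> a ^ r" using y unfolding Bad_def by (intro power_mono) auto
      finally show "card {x\<in>X. set y \<subseteq> U x} \<le> a ^ r" .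
    qed
    also have "\<dots> = card Bad * a ^ r" by simp
    also have "\<dots> \<le> n ^ r * a ^ r" using cardBad by (rule mult_right_mono) simp
    finally show ?thesis .
  qed
  have pm: "card E ^ r \<le> n ^ (r - 1) * (\<Sum>u\<in>V. ind u ^ r)"
    using power_mean_nat[OF finV, of ind k] card_E_indeg[OF finV EV] k
    unfolding n_def ind_def by simp
  have "n ^ (r - 1) * (n ^ r * (a ^ r + a)) = (a ^ r + a) * n ^ (2 * r - 1)"
  proof -
    have "2 * r - 1 = (r - 1) + r" using r1 by simp
    then have "n ^ (2 * r - 1) = n ^ (r - 1) * n ^ r" by (simp add: power_add)
    then show ?thesis by simp
  qed
  then have "n ^ (r - 1) * (n ^ r * (a ^ r + a)) < n ^ (r - 1) * (\<Sum>u\<in>V. ind u ^ r)"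
    using big pm unfolding a_def n_def by linarith
  then have "n ^ r * (a ^ r + a) < (\<Sum>u\<in>V. ind u ^ r)" by (rule mult_less_cancel1[THEN iffD1, THEN conjunct2])
  then have lt: "(\<Sum>x\<in>X. card (badin x) + a) < (\<Sum>x\<in>X. card (U x))"
    using sumBad sumU cardX by (simp add: sum.distrib algebra_simps)
  have "\<exists>x\<in>X. card (badin x) + a < card (U x)"
  proof (rule ccontr)
    assume "\<not> ?thesis"
    then have "(\<Sum>x\<in>X. card (U x)) \<le> (\<Sum>x\<in>X. card (badin x) + a)"
      by (intro sum_mono) (simp add: not_less)
    then show False using lt by linarith
  qed
  then obtain x where x: "x \<in> X" "card (badin x) + a < card (U x)" by blast
  define U' where "U' = U x - hd ` badin x"
  have finbx: "finite (badin x)" using finBad badin_def by auto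
  have "card (U x) - card (hd ` badin x) \<le> card U'"
    unfolding U'_def by (rule diff_card_le_card_Diff) (use finbx in auto)
  moreover have "card (hd ` badin x) \<le> card (badin x)" using finbx by (rule card_image_le)
  ultimately have cU': "card U' > a" using x(2) by linarith
  have U'V: "U' \<subseteq> V" unfolding U'_def U_def by auto
  have good: "card (CN V E (set y)) \<ge> card VH" if y: "set y \<subseteq> U'" "length y = r" for y
  proof (rule ccontr)
    assume "\<not> ?thesis"
    then have "y \<in> Bad" using y U'V unfolding Bad_def X_def a_def by auto
    moreover have "set y \<subseteq> U x" using y U'_def by auto
    ultimately have "hd y \<in> hd ` badin x" unfolding badin_def by auto
    moreover have "hd y \<in> set y" using y k by (cases y) auto
    ultimately show False using y U'_def by auto
  qed
  have "contains_oriented V E VH EH"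
    by (rule embed[OF fin AB EAB deg finV U'V _ good]) (use cU' a_def in auto)
  then show False using nc by contradiction
qed



lemma root_bound:
  fixes m n K r :: nat
  assumes r1: "r \<ge> 1" and h: "m ^ r \<le> K * n ^ (2 * r - 1)"
  shows "real m \<le> real K powr (1 / real r) * real n powr (2 - 1 / real r)"
proof (cases "m = 0")
  case True then show ?thesis by simp
next
  case False
  then have "m ^ r > 0" by simp
  then have "K * n ^ (2 * r - 1) > 0" using h by linarith
  then have K0: "K > 0" and n0: "n > 0" using r1 by (auto simp: zero_less_mult_iff)
  define c where "c = real K powr (1 / real r) * real n powr (2 - 1 / real r)"
  have c0: "c \<ge> 0" unfolding c_def by simp
  have "c ^ r = (real K powr (1 / real r)) ^ r * (real n powr (2 - 1 / real r)) ^ r"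
    unfolding c_def by (simp add: power_mult_distrib)
  also have "\<dots> = real K powr (real r * (1 / real r)) * real n powr (real r * (2 - 1 / real r))"
    using K0 n0 by (simp add: powr_power)
  also have "real r * (1 / real r) = 1" using r1 by simp
  also have "real r * (2 - 1 / real r) = real (2 * r - 1)" using r1 by (simp add: algebra_simps of_nat_diff)
  also have "real K powr 1 * real n powr real (2 * r - 1) = real K * real n ^ (2 * r - 1)"
    using n0 by (simp add: powr_realpow)
  finally have cr: "c ^ r = real (K * n ^ (2 * r - 1))" by simp
  show ?thesis
  proof (rule ccontr)
    assume "\<not> ?thesis"
    then have "c < real m" unfolding c_def by simp
    then have "c ^ r < real m ^ r" using c0 r1 by (intro power_strict_mono) auto
    then have "real (K * n ^ (2 * r - 1)) < real (m ^ r)" using cr by simp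
    then show False using h by linarith
  qed
qed



lemma card_conv: "card (E\<inverse>) = card E"
proof -
  have e: "E\<inverse> = prod.swap ` E"
  proof
    show "E\<inverse> \<subseteq> prod.swap ` E"
    proof (rule subsetI)
      fix p assume p: "p \<in> E\<inverse>"
      obtain a b where ab: "p = (a, b)" by (cases p)
      then have "(b, a) \<in> E" using p by simp
      then show "p \<in> prod.swap ` E" using ab by (intro image_eqI[of _ _ "(b, a)"]) auto
    qed
    show "prod.swap ` E \<subseteq> E\<inverse>" by auto
  qed
  have "inj_on prod.swap E" by (metis inj_onI swap_swap)
  then have "card (prod.swap ` E) = card E" by (rule card_image)
  then show ?thesis using e by (simp only:)
qed

lemma ex_prop:
  assumes "P 0" "\<And>E. oriented_graph {0..<n} E \<Longrightarrow> \<not> contains_oriented {0..<n} E VH EH \<Longrightarrow> P (card E)"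
  shows "P (ex_oriented n VH EH)"
proof -
  define S where "S = {card E | E. oriented_graph {0..<n} E \<and> \<not> contains_oriented {0..<n} E VH EH}"
  have "S \<subseteq> {..n * n}"
  proof
    fix x assume "x \<in> S"
    then obtain E where E: "x = card E" "oriented_graph {0..<n} E" unfolding S_def by blast
    then have "E \<subseteq> {0..<n} \<times> {0..<n}" unfolding oriented_graph_def by blast
    then have "card E \<le> card ({0..<n} \<times> {0..<n})" by (intro card_mono) auto
    then show "x \<in> {..n * n}" using E by (simp add: card_cartesian_product)
  qed
  then have finS: "finite S" using finite_subset by blast
  have "ex_oriented n VH EH = Sup S" unfolding ex_oriented_def S_def ..
  moreover have "P (Sup S)"
  proof (cases "S = {}")
    case True then show ?thesis using assms(1) by (simp add: Sup_nat_def)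
  next
    case False
    then have "Sup S \<in> S" using finS by (simp add: Sup_nat_def)
    then obtain E where "Sup S = card E" "oriented_graph {0..<n} E" "\<not> contains_oriented {0..<n} E VH EH"
      unfolding S_def by blast
    then show ?thesis using assms(2) by simp
  qed
  ultimately show ?thesis by simp
qed

theorem corollary11:
  fixes VH :: "'b set" and EH :: "('b \<times> 'b) set" and A B :: "'b set"
  assumes "oriented_graph VH EH"
    and "A \<inter> B = {}" and "A \<union> B = VH"
    and "EH \<subseteq> A \<times> B"
  shows "(\<lambda>n. real (ex_oriented n VH EH))
           \<in> O(\<lambda>n. real n powr (2 - 1 / real (Delta' EH A B)))"
proof -
  have fin: "finite VH" using assms(1) unfolding oriented_graph_def by blast
  have finA: "finite A" and finB: "finite B" using fin assms(3) by auto
  define r where "r = Delta' EH A B"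
  define SA where "SA = Sup (udeg EH ` A)"
  define SB where "SB = Sup (udeg EH ` B)"
  have r_eq: "r = min SA SB" unfolding r_def SA_def SB_def Delta'_def ..
  have finN: "finite {u. (v, u) \<in> EH \<or> (u, v) \<in> EH}" for v
  proof -
    have "{u. (v, u) \<in> EH \<or> (u, v) \<in> EH} \<subseteq> VH" using assms(3,4) by auto
    then show ?thesis using fin finite_subset by blast
  qed
  have degA: "card {u. (v, u) \<in> EH} \<le> SA" if "v \<in> A" for v
  proof -
    have "card {u. (v, u) \<in> EH} \<le> udeg EH v" unfolding udeg_def
      by (rule card_mono[OF finN]) auto
    also have "udeg EH v \<le> SA" unfolding SA_def
      by (rule cSup_upper) (use that finA in auto)
    finally show ?thesis .
  qed
  have degB: "card {u. (v, u) \<in> EH\<inverse>} \<le> SB" if "v \<in> B" for v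
  proof -
    have "card {u. (v, u) \<in> EH\<inverse>} \<le> udeg EH v" unfolding udeg_def
      by (rule card_mono[OF finN]) auto
    also have "udeg EH v \<le> SB" unfolding SB_def
      by (rule cSup_upper) (use that finB in auto)
    finally show ?thesis .
  qed
  define K where "K = card VH ^ r + card VH"
  have claim: "card E ^ r \<le> K * n ^ (2 * r - 1)"
    if r1: "r \<ge> 1" and og: "oriented_graph {0..<n} E" and nc: "\<not> contains_oriented {0..<n} E VH EH" for n E
  proof -
    have EV: "E \<subseteq> {0..<n} \<times> {0..<n}" using og unfolding oriented_graph_def by blast
    show ?thesis
    proof (cases "r = SA")
      case True
      have "card E ^ r \<le> (card VH ^ r + card VH) * card {0..<n} ^ (2 * r - 1)"
        by (rule core[OF fin assms(3) assms(2) assms(4) _ r1 _ EV nc])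
           (use degA True in auto)
      then show ?thesis unfolding K_def by simp
    next
      case False
      then have rB: "r = SB" using r_eq by linarith
      have nc': "\<not> contains_oriented {0..<n} (E\<inverse>) VH (EH\<inverse>)"
      proof
        assume "contains_oriented {0..<n} (E\<inverse>) VH (EH\<inverse>)"
        then obtain f where f: "inj_on f VH" "f ` VH \<subseteq> {0..<n}"
          "\<forall>(u, v) \<in> EH\<inverse>. (f u, f v) \<in> E\<inverse>" unfolding contains_oriented_def by blast
        have "\<forall>(u, v) \<in> EH. (f u, f v) \<in> E"
        proof (rule ballI)
          fix p assume p: "p \<in> EH"
          obtain u v where uv: "p = (u, v)" by (cases p)
          then have "(v, u) \<in> EH\<inverse>" using p by simp
          then have "(f v, f u) \<in> E\<inverse>" using f(3) by blast
          then show "case p of (u, v) \<Rightarrow> (f u, f v) \<in> E" using uv by simp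
        qed
        then show False using nc f(1,2) unfolding contains_oriented_def by blast
      qed
      have "card (E\<inverse>) ^ r \<le> (card VH ^ r + card VH) * card {0..<n} ^ (2 * r - 1)"
        by (rule core[of VH B A "EH\<inverse>"  r "{0..<n}" "E\<inverse>"])
           (use fin assms(2,3,4) degB rB r1 EV nc' in auto)
      then show ?thesis unfolding K_def by (simp add: card_conv)
    qed
  qed
  show ?thesis
  proof (cases "r = 0")
    case True
    have "real (ex_oriented n VH EH) \<le> 1 * norm (real n powr (2 - 1 / real r))" for n
    proof (rule ex_prop[where P = "\<lambda>x. real x \<le> 1 * norm (real n powr (2 - 1 / real r))"])
      show "real 0 \<le> 1 * norm (real n powr (2 - 1 / real r))" by simp
      fix E assume og: "oriented_graph {0..<n} E"
      then have "E \<subseteq> {0..<n} \<times> {0..<n}" unfolding oriented_graph_def by blast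
      then have "card E \<le> card ({0..<n} \<times> {0..<n})" by (intro card_mono) auto
      then have c: "card E \<le> n * n" by (simp add: card_cartesian_product)
      show "real (card E) \<le> 1 * norm (real n powr (2 - 1 / real r))"
      proof (cases "n = 0")
        case True then show ?thesis using c by simp
      next
        case False
        have e2: "2 - 1 / real r = real (2::nat)" using True by simp
        have "real n powr real (2::nat) = real n ^ 2" using False by (intro powr_realpow) simp
        then have "real n powr (2 - 1 / real r) = real n ^ 2" using e2 by (simp only:)
        moreover have "real (card E) \<le> real (n * n)" using c by (simp only: of_nat_le_iff)
        ultimately show ?thesis by (simp add: power2_eq_square)
      qed
    qed
    then show ?thesis unfolding r_def by (intro bigoI[where c=1]) (auto intro!: always_eventually)
  next
    case False
    then have r1: "r \<ge> 1" by simp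
    have "real (ex_oriented n VH EH) \<le> real K powr (1 / real r) * norm (real n powr (2 - 1 / real r))" for n
    proof (rule ex_prop[where P = "\<lambda>x. real x \<le> real K powr (1 / real r) * norm (real n powr (2 - 1 / real r))"])
      show "real 0 \<le> real K powr (1 / real r) * norm (real n powr (2 - 1 / real r))" by simp
      fix E assume "oriented_graph {0..<n} E" "\<not> contains_oriented {0..<n} E VH EH"
      then have "card E ^ r \<le> K * n ^ (2 * r - 1)" using claim r1 by blast
      then show "real (card E) \<le> real K powr (1 / real r) * norm (real n powr (2 - 1 / real r))"
        using root_bound[OF r1] by simp
    qed
    then show ?thesis unfolding r_def by (intro bigoI) (auto intro!: always_eventually)
  qed
qed

end
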